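(* Let $q\ge3$ be a prime power, $n\ge1$, and let $C\subseteq\mathbb{F}_q^n$ be a linear code of dimension $t$. Then $C\in\mathcal{A}^H_q(n)$ if and only if $C=C_q(n,S)$ for some $S\subseteq\{1,\dots,n\}$ with $|S|=t$.
   Context: For $v\in\mathbb{F}_q^n$, $\mathrm{wt}(v):=|\{i:v_i\ne0\}|$ and $\mathrm{maxwt}(C):=\max\{\mathrm{wt}(c):c\in C\}$. $\mathcal{A}^H_q(n)$ is the set of linear codes $C\subseteq\mathbb{F}_q^n$ with $\dim_{\mathbb{F}_q}(C)=\mathrm{maxwt}(C)$. For $S\subseteq\{1,\dots,n\}$, the free code is $C_q(n,S):=\{v\in\mathbb{F}_q^n: v_i=0\ \text{for all } i\notin S\}$. *)

theory Defs
  imports "HOL-Analysis.Analysis"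
begin

text \<open>Vectors in F_q^n are elements of type 'a ^ 'n (index type 'n with CARD('n) = n).
  Linear codes are subspaces w.r.t. the scalar multiplication (*s).\<close>

definition wt :: "'a::zero ^ 'n \<Rightarrow> nat" where
  "wt v = card {i. v $ i \<noteq> 0}"

definition maxwt :: "('a::zero ^ 'n) set \<Rightarrow> nat" where
  "maxwt C = Max (wt ` C)"

definition A_H :: "('a::{field,finite} ^ 'n) set set" where
  "A_H = {C. vec.subspace C \<and> vec.dim C = maxwt C}"

definition free_code :: "'n set \<Rightarrow> ('a::zero ^ 'n) set" where
  "free_code S = {v. \<forall>i. i \<notin> S \<longrightarrow> v $ i = 0}"

end

theory Submission
  imports Defs
begin

lemma free_code_subspace: "vec.subspace (free_code S :: ('a::field ^ 'n) set)"
  unfolding vec.subspace_def free_code_def by auto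

lemma wt_le_card_supp:
  fixes v :: "'a::zero ^ 'n"
  assumes "A \<subseteq> {i. v $ i \<noteq> 0}"
  shows "card A \<le> wt v"
  unfolding wt_def using assms by (intro card_mono) auto

lemma wt_le_maxwt:
  fixes C :: "('a::{zero,finite} ^ 'n) set"
  assumes "v \<in> C" shows "wt v \<le> maxwt C"
  unfolding maxwt_def using assms by (intro Max_ge) auto

theorem proposition2p6:
  fixes C :: "('a::{field,finite} ^ 'n) set" and t :: nat
  assumes "CARD('a) \<ge> 3"
    and "vec.subspace C"
    and "vec.dim C = t"
  shows "C \<in> A_H \<longleftrightarrow> (\<exists>S. C = free_code S \<and> card S = t)"
proof
  assume "\<exists>S. C = free_code S \<and> card S = t"
  then obtain S where CS: "C = free_code S" and cS: "card S = t" by blast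
  have "maxwt C = card S"
  proof (rule antisym)
    show "maxwt C \<le> card S"
      unfolding maxwt_def
    proof (subst Max_le_iff)
      show "\<forall>a\<in>wt ` C. a \<le> card S"
        using CS unfolding free_code_def wt_def by (auto intro!: card_mono)
    qed (use CS free_code_subspace vec.subspace_0 in auto)
    let ?v = "\<chi> i. if i \<in> S then (1::'a) else 0"
    have "?v \<in> C" using CS unfolding free_code_def by auto
    moreover have "card S \<le> wt ?v" by (rule wt_le_card_supp) auto
    ultimately show "card S \<le> maxwt C" using wt_le_maxwt order_trans by blast
  qed
  then show "C \<in> A_H" unfolding A_H_def using assms cS by auto
next
  assume "C \<in> A_H"
  then have dimC: "vec.dim C = maxwt C" unfolding A_H_def by auto
  have "0 \<in> C" using assms(2) vec.subspace_0 by blast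
  then have ne: "wt ` C \<noteq> {}" by auto
  obtain c where cC: "c \<in> C" and wc: "wt c = maxwt C"
    using Max_in[OF _ ne] unfolding maxwt_def by (metis finite finite_imageI imageE)
  define T where "T = {i. c $ i \<noteq> 0}"
  have cT: "card T = maxwt C" using wc unfolding T_def wt_def by simp
  have big: False if "v \<in> C" "insert k T \<subseteq> {i. v $ i \<noteq> 0}" "k \<notin> T" for v k
  proof -
    have "card (insert k T) \<le> wt v" by (rule wt_le_card_supp[OF that(2)])
    moreover have "card (insert k T) = Suc (card T)" using that(3) by simp
    ultimately show False using wt_le_maxwt[OF that(1)] cT by simp
  qed
  have zero: "d = 0" if "d \<in> C" "\<forall>k\<in>T. d $ k = 0" for d
  proof (rule ccontr)
    assume "d \<noteq> 0"
    then obtain k where k: "d $ k \<noteq> 0" by (metis vec_eq_iff zero_index)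
    then have kT: "k \<notin> T" using that by auto
    have "c + d \<in> C" using assms(2) cC that(1) vec.subspace_add by blast
    moreover have "insert k T \<subseteq> {i. (c + d) $ i \<noteq> 0}"
      using k that(2) kT unfolding T_def by auto
    ultimately show False using big kT by blast
  qed
  define P where "P = (\<lambda>v::'a^'n. \<chi> k. if k \<in> T then v $ k else 0)"
  have linP: "Vector_Spaces.linear (*s) (*s) P"
    unfolding Vector_Spaces.linear_iff P_def
    by (auto simp: vec_eq_iff vec.vector_space_axioms)
  have spanC: "vec.span C = C" using assms(2) vec.span_eq_iff by blast
  have injP: "inj_on P (vec.span C)"
    unfolding spanC
  proof (rule inj_onI)
    fix x y assume xy: "x \<in> C" "y \<in> C" "P x = P y"
    have "x - y \<in> C" using xy assms(2) vec.subspace_diff by blast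
    moreover have "\<forall>k\<in>T. (x - y) $ k = 0"
      using xy(3) unfolding P_def by (simp add: vec_eq_iff) metis
    ultimately have "x - y = 0" using zero by blast
    then show "x = y" by simp
  qed
  have dimPC: "vec.dim (P ` C) = card T"
    using vec.dim_image_eq[OF linP injP] dimC cT by simp
  have PC: "P ` C = free_code T"
  proof (rule vec.subspace_dim_equal)
    show "vec.subspace (P ` C)" using linP assms(2) vec.linear_subspace_image by blast
    show "vec.subspace (free_code T)" by (rule free_code_subspace)
    show "P ` C \<subseteq> free_code T" unfolding P_def free_code_def by auto
    show "vec.dim (free_code T :: ('a^'n) set) \<le> vec.dim (P ` C)"
    proof -
      have "vec.dim (free_code T :: ('a^'n) set) = card T"
        unfolding free_code_def by (rule dim_substandard_cart)
      then show ?thesis using dimPC by simp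
    qed
  qed
  have axC: "axis i 1 \<in> C" if iT: "i \<in> T" for i
  proof -
    have "axis i 1 \<in> free_code T" using iT unfolding free_code_def axis_def by auto
    then obtain e where eC: "e \<in> C" and Pe: "P e = axis i 1" using PC by force
    have eT: "e $ k = (if k = i then 1 else 0)" if "k \<in> T" for k
      using Pe that unfolding P_def axis_def by (simp add: vec_eq_iff) (metis (full_types))
    have eout: "e $ k = 0" if kT: "k \<notin> T" for k
    proof (rule ccontr)
      assume ek: "e $ k \<noteq> 0"
      have "card {0, - c $ i} \<le> 2" by (simp add: card_insert_le_m1)
      then have "{0, - c $ i} \<noteq> (UNIV :: 'a set)" using assms(1) by auto
      then obtain l :: 'a where l: "l \<noteq> 0" "l \<noteq> - c $ i" by auto
      have "c + l *s e \<in> C"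
        using assms(2) cC eC vec.subspace_add vec.subspace_scale by blast
      moreover have "insert k T \<subseteq> {j. (c + l *s e) $ j \<noteq> 0}"
      proof
        fix j assume j: "j \<in> insert k T"
        show "j \<in> {j. (c + l *s e) $ j \<noteq> 0}"
        proof (cases "j = k")
          case True then show ?thesis using kT ek l T_def by auto
        next
          case False
          then have jT: "j \<in> T" using j by auto
          show ?thesis
          proof (cases "j = i")
            case True
            then show ?thesis using eT[OF jT] l(2) by (auto simp: add_eq_0_iff)
          next
            case False
            then show ?thesis using eT[OF jT] jT unfolding T_def by auto
          qed
        qed
      qed
      ultimately show False using big kT by blast
    qed
    have "e = axis i 1"
    proof (rule vec_eq_iff[THEN iffD2], rule allI)
      fix k show "e $ k = axis i 1 $ k"
        using eT[of k] eout[of k] iT by (cases "k \<in> T") (auto simp: axis_def)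
    qed
    then show ?thesis using eC by simp
  qed
  have subC: "free_code T \<subseteq> C"
  proof
    fix x :: "'a^'n" assume x: "x \<in> free_code T"
    have "x = (\<Sum>i\<in>UNIV. x $ i *s axis i 1)"
      by (rule basis_expansion[symmetric])
    also have "\<dots> = (\<Sum>i\<in>T. (x $ i) *s axis i 1)"
      by (rule sum.mono_neutral_cong_right) (use x in \<open>auto simp: free_code_def\<close>)
    also have "\<dots> \<in> C"
      using axC assms(2) by (intro vec.subspace_sum) (auto intro: vec.subspace_scale)
    finally show "x \<in> C" .
  qed
  have "C = free_code T"
  proof
    show "free_code T \<subseteq> C" by (rule subC)
    show "C \<subseteq> free_code T"
    proof
      fix d assume dC: "d \<in> C"
      have Pd: "P d \<in> free_code T" using PC dC by blast
      then have "d - P d \<in> C" using subC dC assms(2) vec.subspace_diff by blast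
      moreover have "\<forall>k\<in>T. (d - P d) $ k = 0" unfolding P_def by auto
      ultimately have "d - P d = 0" using zero by blast
      then show "d \<in> free_code T" using Pd by simp
    qed
  qed
  moreover have "card T = t" using cT dimC assms(3) by simp
  ultimately show "\<exists>S. C = free_code S \<and> card S = t" by blast
qed

end
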